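(* Let $p(t)=\sum_{k=0}^\infty a_kt^k$ with $0\le a_k<1$ for all $k$ and $\sum_k a_k=1$; let $p^{[1]}=p$, $p^{[n+1]}=p(p^{[n]})$ (composition of power series), and $q^{(n)}(t)=\frac1n\sum_{i=1}^np^{[i]}(t)=\sum_{i=0}^\infty q_i^{(n)}t^i$. Then $(q_0^{(n)})_{n\in\mathbb N}$ is monotone increasing and $\lim_{n\to\infty}q^{(n)}=0$, where $q^{(n)}=\sup\{q_i^{(n)}:i\ge1\}$.
   Context: "Monotone increasing" is meant non-strictly. *)

theory Defs
  imports "HOL-Analysis.Analysis" "HOL-Computational_Algebra.Formal_Power_Series"
begin

text \<open>Composition p(f) of real power series, where the inner series may have a nonzero
constant term: the coefficient of t^i is the (infinite) sum over k of p_k times the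
coefficient of t^i in f^k.  For series with nonnegative coefficients summing to 1
(probability generating functions) these sums converge.\<close>
definition pcomp :: "real fps \<Rightarrow> real fps \<Rightarrow> real fps" where
  "pcomp p f = Abs_fps (\<lambda>i. \<Sum>k. fps_nth p k * fps_nth (f ^ k) i)"

text \<open>Iterates: piter p n = p^[n] for n >= 1, with p^[1] = p and p^[n+1] = p(p^[n]).
The value at n = 0 is the identity series X (never used in the statement).\<close>
fun piter :: "real fps \<Rightarrow> nat \<Rightarrow> real fps" where
  "piter p 0 = fps_X"
| "piter p (Suc 0) = p"
| "piter p (Suc (Suc n)) = pcomp p (piter p (Suc n))"

definition qcoeff :: "real fps \<Rightarrow> nat \<Rightarrow> nat \<Rightarrow> real" where
  "qcoeff p n i = (1 / real n) * (\<Sum>j=1..n. fps_nth (piter p j) i)"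

end

theory Submission
  imports Defs "HOL-Real_Asymp.Real_Asymp"
begin


definition pm :: "real fps \<Rightarrow> real \<Rightarrow> bool" where
  "pm f s \<longleftrightarrow> (\<forall>i. 0 \<le> fps_nth f i) \<and> (\<lambda>i. fps_nth f i) sums s"

lemma pm_one: "pm 1 1"
proof -
  have "(\<lambda>r::nat. if r = 0 then (\<lambda>_. 1::real) r else 0) sums 1"
    using sums_single[of 0 "\<lambda>_. 1::real"] by simp
  moreover have "fps_nth (1::real fps) = (\<lambda>r. if r = 0 then 1 else 0)" by (rule ext) simp
  ultimately show ?thesis unfolding pm_def by simp
qed

lemma pm_mult:
  assumes "pm f s" "pm g t"
  shows "pm (f * g) (s * t)"
proof -
  have nf: "\<And>i. 0 \<le> fps_nth f i" and ng: "\<And>i. 0 \<le> fps_nth g i" and sf: "(\<lambda>i. fps_nth f i) sums s" and sg: "(\<lambda>i. fps_nth g i) sums t"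
    using assms unfolding pm_def by auto
  have a: "summable (\<lambda>k. norm (fps_nth f k))" using sf nf by (simp add: sums_iff)
  have b: "summable (\<lambda>k. norm (fps_nth g k))" using sg ng by (simp add: sums_iff)
  have "(\<lambda>k. \<Sum>i\<le>k. fps_nth f i * fps_nth g (k - i)) sums ((\<Sum>k. fps_nth f k) * (\<Sum>k. fps_nth g k))"
    by (rule Cauchy_product_sums[OF a b])
  moreover have "(\<Sum>k. fps_nth f k) = s" "(\<Sum>k. fps_nth g k) = t" using sf sg sums_unique by metis+
  ultimately have "(\<lambda>k. fps_nth (f*g) k) sums (s*t)"
    by (simp add: fps_mult_nth atLeast0AtMost)
  moreover have "\<And>k. 0 \<le> fps_nth (f*g) k"
    by (simp add: fps_mult_nth nf ng sum_nonneg)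
  ultimately show ?thesis unfolding pm_def by auto
qed

lemma pm_power: "pm f s \<Longrightarrow> pm (f ^ k) (s ^ k)"
  by (induction k) (auto simp: pm_one pm_mult)

lemma pm_nonneg: "pm f s \<Longrightarrow> 0 \<le> fps_nth f i"
  unfolding pm_def by auto

lemma pm_summable: "pm f s \<Longrightarrow> summable (\<lambda>i. fps_nth f i)"
  unfolding pm_def by (auto simp: sums_iff)

lemma pm_suminf: "pm f s \<Longrightarrow> (\<Sum>i. fps_nth f i) = s"
  unfolding pm_def by (auto simp: sums_iff)

lemma pm_le: assumes "pm f s" shows "fps_nth f i \<le> s"
proof -
  have "sum (\<lambda>i. fps_nth f i) {i} \<le> (\<Sum>i. fps_nth f i)"
    by (rule sum_le_suminf) (use assms in \<open>auto simp: pm_summable pm_nonneg\<close>)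
  then show ?thesis using pm_suminf[OF assms] by simp
qed

lemma pm_s_nonneg: "pm f s \<Longrightarrow> 0 \<le> s"
  using pm_suminf[of f s] suminf_nonneg[of "\<lambda>i. fps_nth f i"] by (auto simp: pm_summable pm_nonneg)

lemma swap_sums:
  fixes w :: "nat \<Rightarrow> nat \<Rightarrow> real"
  assumes nn: "\<And>k i. 0 \<le> w k i" and row: "\<And>k. (\<lambda>i. w k i) sums s k" and tot: "s sums S"
  shows "(\<lambda>i. \<Sum>k. w k i) sums S \<and> (\<forall>i. summable (\<lambda>k. w k i))"
proof -
  have s_nn: "0 \<le> s k" for k
    using row[of k] nn by (metis sums_iff suminf_nonneg)
  have hr: "((\<lambda>i. w k i) has_sum s k) UNIV" for k
    by (rule sums_nonneg_imp_has_sum[OF row nn])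
  have hs: "(s has_sum S) UNIV"
    by (rule sums_nonneg_imp_has_sum[OF tot s_nn])
  have sm: "(\<lambda>(k,i). w k i) summable_on Sigma UNIV (\<lambda>_. UNIV)"
    by (rule summable_on_SigmaI[where g = s]) (use hr hs nn in \<open>auto simp: has_sum_imp_summable\<close>)
  have H: "((\<lambda>(k,i). w k i) has_sum S) (Sigma UNIV (\<lambda>_. UNIV))"
    by (rule has_sum_SigmaI[where g = s]) (use hr hs sm in auto)
  have H': "((\<lambda>(i,k). w k i) has_sum S) (UNIV \<times> UNIV)"
    using has_sum_swap[THEN iffD1, OF H] by (simp add: case_prod_unfold)
  have sm': "(\<lambda>(i,k). w k i) summable_on Sigma UNIV (\<lambda>_. UNIV)"
    using H' has_sum_imp_summable by auto
  have col: "(\<lambda>k. w k i) summable_on UNIV" for i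
    using summable_on_SigmaD1[of "\<lambda>i k. w k i", OF sm'] by auto
  have colh: "((\<lambda>k. w k i) has_sum (\<Sum>k. w k i)) UNIV" for i
  proof -
    have "summable (\<lambda>k. w k i)" using col[of i] summable_on_imp_summable by blast
    then show ?thesis by (rule sums_nonneg_imp_has_sum[OF summable_sums]) (rule nn)
  qed
  have "((\<lambda>i. \<Sum>k. w k i) has_sum S) UNIV"
    by (rule has_sum_Sigma'[where f = "\<lambda>(i,k). w k i"]) (use H' colh in auto)
  then show ?thesis using has_sum_imp_sums col summable_on_imp_summable by blast
qed


lemma pcomp_nth: "fps_nth (pcomp p g) i = (\<Sum>k. fps_nth p k * fps_nth (g^k) i)"
  by (simp add: pcomp_def)

lemma pm_pcomp:
  assumes p: "pm p s" and g: "pm g 1"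
  shows "pm (pcomp p g) s"
proof -
  have gk: "pm (g^k) 1" for k using pm_power[OF g, of k] by simp
  have row: "(\<lambda>i. fps_nth p k * fps_nth (g^k) i) sums (fps_nth p k)" for k
    using sums_mult[OF gk[unfolded pm_def, THEN conjunct2], of "fps_nth p k"] by simp
  have "(\<lambda>i. \<Sum>k. fps_nth p k * fps_nth (g^k) i) sums s"
    using swap_sums[of "\<lambda>k i. fps_nth p k * fps_nth (g^k) i", OF _ row] p gk
    by (auto simp: pm_def pm_nonneg)
  moreover have "0 \<le> fps_nth (pcomp p g) i" for i
    unfolding pcomp_nth
    using swap_sums[of "\<lambda>k i. fps_nth p k * fps_nth (g^k) i", OF _ row] p gk
    by (intro suminf_nonneg) (auto simp: pm_def pm_nonneg)
  ultimately show ?thesis unfolding pm_def pcomp_nth by auto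
qed

definition ev :: "real fps \<Rightarrow> real \<Rightarrow> real" where
  "ev f x = (\<Sum>i. fps_nth f i * x ^ i)"

lemma ev_summable:
  assumes "pm f s" "0 \<le> x" "x \<le> 1"
  shows "summable (\<lambda>i. fps_nth f i * x ^ i)"
proof (rule summable_comparison_test'[OF pm_summable[OF assms(1)]])
  fix n :: nat
  have "fps_nth f n * x ^ n \<le> fps_nth f n * 1"
    using assms by (intro mult_left_mono power_le_one pm_nonneg) (auto intro: pm_nonneg)
  then show "norm (fps_nth f n * x ^ n) \<le> fps_nth f n"
    using assms by (simp add: pm_nonneg)
qed

lemma ev_sums: "pm f s \<Longrightarrow> 0 \<le> x \<Longrightarrow> x \<le> 1 \<Longrightarrow> (\<lambda>i. fps_nth f i * x ^ i) sums (ev f x)"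
  unfolding ev_def using ev_summable summable_sums by blast

lemma ev_nonneg: "pm f s \<Longrightarrow> 0 \<le> x \<Longrightarrow> x \<le> 1 \<Longrightarrow> 0 \<le> ev f x"
  unfolding ev_def by (intro suminf_nonneg ev_summable) (auto intro!: mult_nonneg_nonneg pm_nonneg)

lemma ev_le: assumes "pm f s" "0 \<le> x" "x \<le> 1" shows "ev f x \<le> s"
proof -
  have "ev f x \<le> (\<Sum>i. fps_nth f i)"
    unfolding ev_def
    using assms by (intro suminf_le ev_summable pm_summable mult_right_le_one_le pm_nonneg power_le_one) auto
  then show ?thesis using pm_suminf[OF assms(1)] by simp
qed

lemma ev_mult:
  assumes "pm f s" "pm g t" "0 \<le> x" "x \<le> 1"
  shows "ev (f * g) x = ev f x * ev g x"
proof -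
  have nf: "summable (\<lambda>k. norm (fps_nth f k * x ^ k))"
    using ev_summable[OF assms(1,3,4)] assms by (simp add: pm_nonneg[OF assms(1)])
  have ng: "summable (\<lambda>k. norm (fps_nth g k * x ^ k))"
    using ev_summable[OF assms(2,3,4)] assms by (simp add: pm_nonneg[OF assms(2)])
  have "ev f x * ev g x =
          (\<Sum>k. \<Sum>i\<le>k. fps_nth f i * x ^ i * (fps_nth g (k - i) * x ^ (k - i)))"
    unfolding ev_def by (rule Cauchy_product[OF nf ng])
  also have "(\<lambda>k. \<Sum>i\<le>k. fps_nth f i * x ^ i * (fps_nth g (k - i) * x ^ (k - i))) =
               (\<lambda>k. \<Sum>i\<le>k. fps_nth f i * fps_nth g (k - i) * x ^ k)"
    by (intro ext sum.cong refl) (simp add: power_add [symmetric])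
  also have "suminf \<dots> = ev (f * g) x"
    by (simp add: ev_def fps_mult_nth atLeast0AtMost sum_distrib_right)
  finally show ?thesis ..
qed

lemma ev_power:
  assumes "pm f s" "0 \<le> x" "x \<le> 1"
  shows "ev (f ^ k) x = ev f x ^ k"
proof (induction k)
  case 0
  have "ev 1 x = 1"
  proof -
    have "(\<lambda>i. fps_nth (1::real fps) i * x ^ i) = (\<lambda>r. if r = 0 then 1 else 0)"
      by (rule ext) simp
    then show ?thesis unfolding ev_def using sums_single[of 0 "\<lambda>_. 1::real"] by (simp add: sums_iff)
  qed
  then show ?case by simp
next
  case (Suc k)
  then show ?case using ev_mult[OF assms(1) pm_power[OF assms(1)] assms(2,3)] by simp
qed

lemma ev_pcomp:
  assumes p: "pm p s" and g: "pm g 1" and x: "0 \<le> x" "x \<le> 1"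
  shows "ev (pcomp p g) x = ev p (ev g x)"
proof -
  have gk: "pm (g^k) 1" for k using pm_power[OF g, of k] by simp
  have egx: "0 \<le> ev g x" "ev g x \<le> 1" using ev_nonneg[OF g x] ev_le[OF g x] by auto
  define w where "w k i = fps_nth p k * fps_nth (g^k) i * x ^ i" for k i
  have nn: "0 \<le> w k i" for k i unfolding w_def using p gk x by (auto intro!: mult_nonneg_nonneg pm_nonneg)
  have row: "(\<lambda>i. w k i) sums (fps_nth p k * ev g x ^ k)" for k
  proof -
    have "(\<lambda>i. fps_nth p k * (fps_nth (g^k) i * x ^ i)) sums (fps_nth p k * ev (g^k) x)"
      by (rule sums_mult[OF ev_sums[OF gk x]])
    then show ?thesis unfolding w_def using ev_power[OF g x] by (simp add: mult.assoc)
  qed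
  have tot: "(\<lambda>k. fps_nth p k * ev g x ^ k) sums (ev p (ev g x))"
    by (rule ev_sums[OF p egx])
  from swap_sums[OF nn row tot]
  have S: "(\<lambda>i. \<Sum>k. w k i) sums ev p (ev g x)" and sm: "\<And>i. summable (\<lambda>k. w k i)" by auto
  have "(\<Sum>k. w k i) = fps_nth (pcomp p g) i * x ^ i" for i
  proof -
    have sm2: "summable (\<lambda>k. fps_nth p k * fps_nth (g^k) i)"
      using swap_sums[of "\<lambda>k i. fps_nth p k * fps_nth (g^k) i" "\<lambda>k. fps_nth p k" s] p gk
        sums_mult[OF gk[unfolded pm_def, THEN conjunct2]]
      by (auto simp: pm_def pm_nonneg)
    show ?thesis unfolding w_def pcomp_nth using suminf_mult2[OF sm2, of "x^i"] by simp
  qed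
  then show ?thesis using S unfolding ev_def by (simp add: sums_iff)
qed


lemma ev_unique:
  assumes f: "pm f s" and h: "pm h t" and eq: "\<And>x. 0 \<le> x \<Longrightarrow> x < 1 \<Longrightarrow> ev f x = ev h x"
  shows "f = h"
proof -
  define d where "d i = fps_nth f i - fps_nth h i" for i
  have sd: "summable (\<lambda>i. norm (d i))"
  proof (rule summable_comparison_test'[OF summable_add[OF pm_summable[OF f] pm_summable[OF h]]])
    fix n show "norm (norm (d n)) \<le> fps_nth f n + fps_nth h n"
      unfolding d_def using pm_nonneg[OF f, of n] pm_nonneg[OF h, of n] by auto
  qed
  have sdx: "summable (\<lambda>i. d (i + n) * x ^ i)" if "norm x < 1" for n and x :: real
  proof (rule summable_comparison_test'[OF summable_ignore_initial_segment[OF sd, of n]])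
    fix i
    have "\<bar>x\<bar> ^ i \<le> 1" using that by (intro power_le_one) auto
    then have "norm (x ^ i) \<le> 1" by (simp add: power_abs)
    then show "norm (d (i + n) * x ^ i) \<le> norm (d (i + n))"
      by (simp add: abs_mult mult_left_le del: power_abs)
  qed
  have zero: "(\<lambda>i. d i * x ^ i) sums 0" if "0 \<le> x" "x < 1" for x :: real
  proof -
    have "(\<lambda>i. fps_nth f i * x ^ i - fps_nth h i * x ^ i) sums (ev f x - ev h x)"
      using that by (intro sums_diff ev_sums[OF f] ev_sums[OF h]) auto
    then show ?thesis using eq[OF that] by (simp add: d_def algebra_simps)
  qed
  have "d n = 0" for n
  proof (induction n rule: less_induct)
    case (less n)
    define F where "F x = (\<Sum>i. d (i + n) * x ^ i)" for x :: real
    have lim: "(F \<longlongrightarrow> d (0 + n)) (at 0)"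
      by (rule powser_limit_0[of 1]) (use sdx in \<open>auto simp: F_def summable_sums\<close>)
    have Fz: "F x = 0" if "0 < x" "x < 1" for x
    proof -
      have "(\<lambda>i. d (i + n) * x ^ (i + n)) sums (0 - (\<Sum>i<n. d i * x ^ i))"
        using sums_split_initial_segment[OF zero[of x], of n] that by simp
      moreover have "(\<Sum>i<n. d i * x ^ i) = 0" using less by simp
      ultimately have "(\<lambda>i. (d (i + n) * x ^ i) * x ^ n) sums 0"
        by (simp add: power_add mult.assoc)
      then have "(\<lambda>i. (d (i + n) * x ^ i) * x ^ n / x ^ n) sums (0 / x ^ n)"
        by (rule sums_divide)
      then have "(\<lambda>i. d (i + n) * x ^ i) sums 0" using that by simp
      then show ?thesis unfolding F_def by (simp add: sums_iff)
    qed
    have lim2: "(F \<longlongrightarrow> d n) (at_right 0)"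
      using tendsto_within_subset[OF lim[simplified], of "{0<..}"] by simp
    have "eventually (\<lambda>x. F x = 0) (at_right (0::real))"
    proof -
      have "eventually (\<lambda>x. x \<in> {0<..<1}) (at_right (0::real))"
        by (rule eventually_at_right_real) simp
      then show ?thesis by (rule eventually_mono) (auto intro: Fz)
    qed
    then have "((\<lambda>x. 0) \<longlongrightarrow> d n) (at_right (0::real))"
      using lim2 by (rule Lim_transform_eventually[rotated])
    then show "d n = 0" by (simp add: tendsto_const_iff)
  qed
  then show ?thesis unfolding d_def by (intro fps_ext) simp
qed


definition cb :: "nat \<Rightarrow> real" where "cb m = real (m choose (m div 2)) / 2 ^ m"

lemma cb_nonneg: "0 \<le> cb m" by (simp add: cb_def)

lemma cb_le1: "cb m \<le> 1"
  unfolding cb_def using binomial_le_pow2[of m "m div 2"]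
  by (simp add: divide_le_eq_1)

lemma choose_Suc_le: "Suc m choose k \<le> 2 * (m choose (m div 2))"
proof (cases k)
  case 0
  have "0 < m choose (m div 2)" by (rule zero_less_binomial) simp
  then show ?thesis using 0 by (simp add: Suc_leI)
next
  case (Suc k')
  then show ?thesis using binomial_maximum[of m k'] binomial_maximum[of m "Suc k'"] by simp
qed

lemma cb_Suc: "cb (Suc m) \<le> cb m"
proof -
  have "real (Suc m choose (Suc m div 2)) \<le> 2 * real (m choose (m div 2))"
    using choose_Suc_le[of m "Suc m div 2"] by (metis of_nat_le_iff of_nat_mult of_nat_numeral)
  then show ?thesis unfolding cb_def by (simp add: field_simps)
qed

lemma cb_antimono: "m' \<le> m \<Longrightarrow> cb m \<le> cb m'"
proof (induction m rule: dec_induct)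
  case base then show ?case by simp
next
  case (step n) then show ?case using cb_Suc[of n] by simp
qed

lemma central_rec: "Suc n * ((2 * Suc n) choose Suc n) = 2 * (2 * n + 1) * ((2 * n) choose n)"
proof -
  have e1: "Suc n * (Suc (Suc (2*n)) choose Suc n) = Suc (Suc (2*n)) * (Suc (2*n) choose n)"
    by (rule Suc_times_binomial)
  have e2: "Suc n * (Suc (2*n) choose Suc n) = Suc (2*n) * ((2*n) choose n)"
    by (rule Suc_times_binomial)
  have e3: "Suc (2*n) choose n = Suc (2*n) choose Suc n"
    using binomial_symmetric[of n "Suc (2*n)"] by (simp add: Suc_diff_le)
  have "Suc (Suc (2*n)) = 2 * Suc n" by simp
  then have "Suc n * ((2 * Suc n) choose Suc n) = 2 * (Suc n * (Suc (2*n) choose Suc n))"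
    using e1 e3 by (simp add: mult_ac)
  also have "\<dots> = 2 * (2 * n + 1) * ((2 * n) choose n)" using e2 by simp
  finally show ?thesis .
qed

lemma cb_even: "cb (2*k) = real ((2*k) choose k) / 4^k"
  by (simp add: cb_def power_mult)

lemma cb_even_sq: "(cb (2*n))^2 * (2 * n + 1) \<le> 1"
proof (induction n)
  case 0 then show ?case by (simp add: cb_def)
next
  case (Suc n)
  obtain X where X: "X = real ((2 * Suc n) choose Suc n)" by blast
  obtain Y where Y: "Y = real ((2 * n) choose n)" by blast
  have e1: "cb (2*Suc n) = X / 4^(Suc n)" unfolding X by (rule cb_even)
  have e2: "cb (2*n) = Y / 4^n" unfolding Y by (rule cb_even)
  have e3: "real (Suc n) * X = 2*(2*real n + 1) * Y"
    unfolding X Y using arg_cong[OF central_rec[of n], of real]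
    by (simp only: of_nat_mult of_nat_add of_nat_numeral of_nat_1)
  have "cb (2*Suc n) * (2*n+2) = 2 * (real (Suc n) * X) / 4^(Suc n)" unfolding e1 by (simp add: field_simps)
  also have "\<dots> = cb (2*n) * (2*n+1)" unfolding e3 e2 by (simp add: field_simps)
  finally have rec0: "cb (2*Suc n) * (2*n+2) = cb (2*n) * (2*n+1)" .
  have rec: "cb (2 * Suc n) = cb (2*n) * (2*n+1) / (2*n+2)"
    using rec0 by (simp add: field_simps)
  have "(cb (2 * Suc n))^2 * (2 * Suc n + 1) = (cb (2*n))^2 * (2*real n+1) * ((2*real n+1)*(2*real n+3) / (2*real n+2)^2)"
    unfolding rec by (simp add: field_simps power2_eq_square)
  also have "\<dots> \<le> 1 * 1"
  proof -
    have f1: "(cb (2*n))^2 * (2*real n+1) \<le> 1" using Suc by (simp add: add.commute)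
    have "(2*real n+1)*(2*real n+3) \<le> (2*real n+2)^2" by (simp add: power2_eq_square algebra_simps)
    then have f2: "(2*real n+1)*(2*real n+3) / (2*real n+2)^2 \<le> 1" by simp
    show ?thesis by (rule mult_mono[OF f1 f2]) auto
  qed
  finally show ?case by simp
qed

lemma cb_small: assumes "e > 0" shows "\<exists>M. \<forall>m\<ge>M. cb m \<le> e"
proof -
  obtain N :: nat where N: "1 / e^2 \<le> N" using real_arch_simple by blast
  have "\<forall>m\<ge>2*N. cb m \<le> e"
  proof (intro allI impI)
    fix m assume m: "2*N \<le> m"
    let ?n = "m div 2"
    have "cb m \<le> cb (2 * ?n)" by (rule cb_antimono) simp
    moreover have "cb (2 * ?n) \<le> e"
    proof -
      have nn: "N \<le> ?n" using m by simp
      have "(cb (2 * ?n))^2 * (2 * ?n + 1) \<le> 1" by (rule cb_even_sq)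
      moreover have "1 / e^2 \<le> 2 * ?n + 1"
      proof -
        have "real N \<le> real (2 * ?n + 1)" using nn by simp
        then show ?thesis using N by linarith
      qed
      ultimately have "(cb (2 * ?n))^2 * (1 / e^2) \<le> 1"
        by (smt (verit) mult_left_mono zero_le_power2)
      then have "(cb (2 * ?n))^2 \<le> e^2" using assms by (simp add: field_simps)
      then show ?thesis using assms cb_nonneg by (simp add: power2_le_iff_abs_le)
    qed
    ultimately show "cb m \<le> e" by simp
  qed
  then show ?thesis by blast
qed


lemma pow_geom_lim: "0 < q \<Longrightarrow> q < (1::real) \<Longrightarrow> (\<lambda>l. real l ^ m * q ^ l) \<longlonglongrightarrow> 0"
  by real_asymp

lemma binom_term_lim:
  assumes g: "0 < g" "g \<le> (1::real)"
  shows "(\<lambda>l. real (l choose m) * g ^ m * (1 - g) ^ (l - m)) \<longlonglongrightarrow> 0"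
proof -
  have bound: "\<bar>real (l choose m) * g ^ m * (1 - g) ^ (l - m)\<bar> \<le> real l ^ m * (1 - g) ^ (l - m)" for l
  proof -
    have c: "real (l choose m) \<le> real l ^ m"
    proof (cases "m \<le> l")
      case True then show ?thesis using binomial_le_pow[OF True] by (metis of_nat_le_iff of_nat_power)
    next
      case False then show ?thesis by (simp add: binomial_eq_0)
    qed
    have "g ^ m \<le> 1" using g by (simp add: power_le_one)
    then have "real (l choose m) * g ^ m * (1 - g) ^ (l - m) \<le> real l ^ m * 1 * (1 - g) ^ (l - m)"
      using g c by (intro mult_right_mono mult_mono) auto
    moreover have "0 \<le> real (l choose m) * g ^ m * (1 - g) ^ (l - m)" using g by simp
    ultimately show ?thesis by simp
  qed
  have lim: "(\<lambda>l. real l ^ m * (1 - g) ^ (l - m)) \<longlonglongrightarrow> 0"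
  proof (cases "g = 1")
    case True
    have "eventually (\<lambda>l. real l ^ m * (1 - g) ^ (l - m) = 0) sequentially"
      using eventually_gt_at_top[of m] by eventually_elim (simp add: True)
    then show ?thesis by (rule tendsto_eventually)
  next
    case False
    then have q: "0 < 1 - g" "1 - g < 1" using g by auto
    have "(\<lambda>l. real l ^ m * (1 - g) ^ l / (1 - g) ^ m) \<longlonglongrightarrow> 0 / (1 - g) ^ m"
      by (intro tendsto_divide pow_geom_lim q tendsto_const) (use q in auto)
    moreover have "eventually (\<lambda>l. real l ^ m * (1 - g) ^ l / (1 - g) ^ m = real l ^ m * (1 - g) ^ (l - m)) sequentially"
      using eventually_ge_at_top[of m]
    proof eventually_elim
      case (elim l)
      then have "(1 - g) ^ l = (1 - g) ^ (l - m) * (1 - g) ^ m" by (simp add: power_add[symmetric])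
      then show ?case using q by simp
    qed
    ultimately show ?thesis by (simp add: Lim_transform_eventually)
  qed
  show ?thesis
    by (rule Lim_null_comparison[OF _ lim]) (use bound in \<open>auto intro: always_eventually\<close>)
qed

lemma binom_tail_lim:
  assumes g: "0 < g" "g \<le> (1::real)"
  shows "(\<lambda>l. \<Sum>m<M. real (l choose m) * g ^ m * (1 - g) ^ (l - m)) \<longlonglongrightarrow> 0"
  by (rule tendsto_null_sum) (rule binom_term_lim[OF g])


lemma GB:
  assumes B: "\<And>j. 0 \<le> fps_nth B j \<and> fps_nth B j \<le> c" and R: "pm R s"
  shows "fps_nth (B * R) i \<le> c * s"
proof -
  have c0: "0 \<le> c" using B[of 0] by auto
  have "fps_nth (B * R) i = (\<Sum>j=0..i. fps_nth R j * fps_nth B (i - j))"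
    by (simp add: mult.commute[of B R] fps_mult_nth)
  also have "\<dots> \<le> (\<Sum>j=0..i. fps_nth R j * c)"
    by (intro sum_mono mult_left_mono) (use B pm_nonneg[OF R] in auto)
  also have "\<dots> = c * (\<Sum>j\<in>{0..i}. fps_nth R j)" by (simp add: sum_distrib_left mult.commute)
  also have "(\<Sum>j\<in>{0..i}. fps_nth R j) \<le> (\<Sum>j. fps_nth R j)"
    by (rule sum_le_suminf) (use pm_summable[OF R] pm_nonneg[OF R] in auto)
  then have "c * (\<Sum>j\<in>{0..i}. fps_nth R j) \<le> c * s"
    using pm_suminf[OF R] c0 by (simp add: mult_left_mono)
  finally show ?thesis .
qed

lemma inj_lin:
  fixes u v m b b' :: nat
  assumes "u \<noteq> v" "b \<le> m" "b' \<le> m" "u * b + v * (m - b) = u * b' + v * (m - b')"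
  shows "b = b'"
proof -
  have "int (u * b + v * (m - b)) = int (u * b' + v * (m - b'))" using assms(4) by simp
  then have "int u * int b + int v * (int m - int b) = int u * int b' + int v * (int m - int b')"
    using assms(2,3) by (simp add: of_nat_diff)
  then have "(int u - int v) * (int b - int b') = 0" by (simp add: algebra_simps)
  then show ?thesis using assms(1) by simp
qed

lemma Bpow_coeff:
  assumes uv: "u \<noteq> v"
  shows "0 \<le> fps_nth ((fps_X^u + fps_X^v :: real fps)^m) j \<and>
         fps_nth ((fps_X^u + fps_X^v :: real fps)^m) j \<le> real (m choose (m div 2))"
proof -
  have eq: "(fps_X^u + fps_X^v :: real fps)^m =
      (\<Sum>b\<le>m. fps_const (real (m choose b)) * fps_X^(u * b + v * (m - b)))"
    unfolding binomial_ring by (intro sum.cong refl) (simp add: fps_of_nat power_mult power_add mult.assoc)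
  define S where "S = {b \<in> {..m}. j = u * b + v * (m - b)}"
  have "fps_nth ((fps_X^u + fps_X^v :: real fps)^m) j =
      (\<Sum>b\<le>m. if j = u * b + v * (m - b) then real (m choose b) else 0)"
    unfolding eq fps_sum_nth by (intro sum.cong) auto
  also have "\<dots> = (\<Sum>b\<in>S. real (m choose b))" unfolding S_def by (rule sum.inter_filter[symmetric]) simp
  finally have nth: "fps_nth ((fps_X^u + fps_X^v :: real fps)^m) j = (\<Sum>b\<in>S. real (m choose b))" .
  have Ssub: "S \<subseteq> {b0}" if "b0 \<in> S" for b0
    using that inj_lin[OF uv] unfolding S_def by auto
  have "(\<Sum>b\<in>S. real (m choose b)) \<le> real (m choose (m div 2))"
  proof (cases "S = {}")
    case True then show ?thesis by simp
  next
    case False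
    then obtain b0 where "b0 \<in> S" by auto
    with Ssub have "S = {b0}" by auto
    then show ?thesis using binomial_maximum[of m b0] by simp
  qed
  moreover have "0 \<le> (\<Sum>b\<in>S. real (m choose b))" by (simp add: sum_nonneg)
  ultimately show ?thesis unfolding nth by simp
qed


lemma two_atoms:
  assumes p: "pm p 1" and lt: "\<forall>k. fps_nth p k < 1"
  shows "\<exists>u v. u \<noteq> v \<and> 0 < fps_nth p u \<and> 0 < fps_nth p v"
proof -
  have pnn: "\<And>k. 0 \<le> fps_nth p k" using pm_nonneg[OF p] by blast
  have sp: "(\<lambda>k. fps_nth p k) sums 1" using p unfolding pm_def by blast
  have "\<exists>u. 0 < fps_nth p u"
  proof (rule ccontr)
    assume a: "\<not> (\<exists>u. 0 < fps_nth p u)"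
    have z: "fps_nth p u = 0" for u
    proof -
      have "\<not> 0 < fps_nth p u" using a by blast
      then show ?thesis using pnn[of u] by linarith
    qed
    have "(\<lambda>k. fps_nth p k) sums 0" unfolding z by (rule sums_zero)
    from sums_unique2[OF sp this] show False by simp
  qed
  then obtain u where u: "0 < fps_nth p u" by blast
  have "\<exists>v. v \<noteq> u \<and> 0 < fps_nth p v"
  proof (rule ccontr)
    assume a: "\<not> (\<exists>v. v \<noteq> u \<and> 0 < fps_nth p v)"
    have z: "(if k = u then fps_nth p k else 0) = fps_nth p k" for k
    proof (cases "k = u")
      case False
      then have "\<not> 0 < fps_nth p k" using a by blast
      then show ?thesis using pnn[of k] False by simp
    qed simp
    have "(\<lambda>k. if k = u then fps_nth p k else 0) sums fps_nth p u" by (rule sums_single)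
    then have "(\<lambda>k. fps_nth p k) sums fps_nth p u" unfolding z .
    from sums_unique2[OF sp this] have "fps_nth p u = 1" by simp
    then show False using lt by (metis less_irrefl)
  qed
  then show ?thesis using u by blast
qed

lemma t5: "(of_nat c :: real fps) * (fps_const b * B)^m * R = fps_const (real c * b^m) * (B^m * R)"
proof -
  have "(of_nat c :: real fps) * (fps_const b * B)^m * R = (fps_const (real c) * fps_const (b^m)) * (B^m * R)"
    by (simp only: fps_of_nat power_mult_distrib fps_const_power mult.assoc)
  also have "\<dots> = fps_const (real c * b^m) * (B^m * R)" by (simp only: fps_const_mult)
  finally show ?thesis .
qed

lemma t6: "(x::real) * b^m * (c * y) = x * (2*b)^m * y * (c / 2^m)"
  by (simp add: power_mult_distrib)


lemma r_pm_lemma: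
  assumes p: "pm p 1" and v: "u \<noteq> v" and b0: "0 < \<beta>" and bu: "\<beta> \<le> fps_nth p u" and bv: "\<beta> \<le> fps_nth p v"
  shows "pm (p - fps_const \<beta> * (fps_X^u + fps_X^v)) (1 - 2 * \<beta>)"
proof -
  define A :: "real fps" where "A = fps_const \<beta> * (fps_X^u + fps_X^v)"
  have pnn: "\<And>k. 0 \<le> fps_nth p k" using pm_nonneg[OF p] by blast
  have Anth: "fps_nth A k = (if k = u then \<beta> else 0) + (if k = v then \<beta> else 0)" for k
    by (simp add: A_def)
  have s1: "(\<lambda>k. if k = u then \<beta> else 0) sums \<beta>" using sums_single[of u "\<lambda>_. \<beta>"] by simp
  have s2: "(\<lambda>k. if k = v then \<beta> else 0) sums \<beta>" using sums_single[of v "\<lambda>_. \<beta>"] by simp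
  have "(\<lambda>k. fps_nth A k) sums (\<beta> + \<beta>)"
    unfolding Anth by (rule sums_add[OF s1 s2])
  then have S: "(\<lambda>k. fps_nth p k - fps_nth A k) sums (1 - (\<beta> + \<beta>))"
    using p unfolding pm_def by (intro sums_diff) auto
  have N: "0 \<le> fps_nth p k - fps_nth A k" for k
  proof (cases "k = u")
    case True then show ?thesis using v bu unfolding Anth by simp
  next
    case False
    then show ?thesis
    proof (cases "k = v")
      case True then show ?thesis using False bv unfolding Anth by simp
    next
      case False2: False
      then show ?thesis using False pnn[of k] unfolding Anth by simp
    qed
  qed
  have rn: "fps_nth (p - A) = (\<lambda>k. fps_nth p k - fps_nth A k)"
    by (rule ext) simp
  have "1 - (\<beta> + \<beta>) = 1 - 2 * \<beta>" by simp
  then show ?thesis using S N unfolding pm_def A_def[symmetric] rn by metis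
qed

lemma conc_bound:
  assumes p: "pm p 1" and v: "u \<noteq> v" and b0: "0 < \<beta>" and bu: "\<beta> \<le> fps_nth p u" and bv: "\<beta> \<le> fps_nth p v"
  shows "fps_nth (p^l) i \<le> (\<Sum>m\<le>l. real (l choose m) * (2*\<beta>) ^ m * (1 - 2*\<beta>) ^ (l - m) * cb m)"
proof -
  define B :: "real fps" where "B = fps_X^u + fps_X^v"
  define A where "A = fps_const \<beta> * B"
  define r where "r = p - A"
  have r_pm: "pm r (1 - 2 * \<beta>)" unfolding r_def A_def B_def by (rule r_pm_lemma[OF p v b0 bu bv])
  have pAr: "p = A + r" by (simp add: r_def)
  have "p^l = (A + r)^l" by (simp only: pAr)
  also have "\<dots> = (\<Sum>m\<le>l. of_nat (l choose m) * A^m * r^(l-m))" by (rule binomial_ring)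
  also have "\<dots> = (\<Sum>m\<le>l. fps_const (real (l choose m) * \<beta> ^ m) * (B^m * r^(l-m)))"
    by (rule sum.cong[OF refl]) (simp only: A_def t5)
  finally have "p^l = (\<Sum>m\<le>l. fps_const (real (l choose m) * \<beta> ^ m) * (B^m * r^(l-m)))" .
  then have "fps_nth (p^l) i = (\<Sum>m\<le>l. real (l choose m) * \<beta> ^ m * fps_nth (B^m * r^(l-m)) i)"
    by (simp only: fps_sum_nth fps_mult_left_const_nth)
  also have "\<dots> \<le> (\<Sum>m\<le>l. real (l choose m) * \<beta> ^ m * (real (m choose (m div 2)) * (1 - 2*\<beta>)^(l-m)))"
  proof (rule sum_mono)
    fix m
    have bm: "\<And>j. 0 \<le> fps_nth (B^m) j \<and> fps_nth (B^m) j \<le> real (m choose (m div 2))"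
      unfolding B_def by (rule Bpow_coeff[OF v])
    have "fps_nth (B^m * r^(l-m)) i \<le> real (m choose (m div 2)) * (1 - 2*\<beta>)^(l-m)"
      by (rule GB[OF bm pm_power[OF r_pm]])
    moreover have "0 \<le> real (l choose m) * \<beta> ^ m" using b0 by simp
    ultimately show "real (l choose m) * \<beta> ^ m * fps_nth (B^m * r^(l-m)) i
        \<le> real (l choose m) * \<beta> ^ m * (real (m choose (m div 2)) * (1 - 2*\<beta>)^(l-m))"
      by (rule mult_left_mono)
  qed
  also have "\<dots> = (\<Sum>m\<le>l. real (l choose m) * (2*\<beta>) ^ m * (1 - 2*\<beta>) ^ (l - m) * cb m)"
    by (rule sum.cong[OF refl]) (unfold cb_def, rule t6)
  finally show ?thesis .
qed

lemma conc_tail: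
  assumes g: "0 < g" "g \<le> 1" and e: "0 < e"
  shows "\<exists>K. \<forall>l\<ge>K. (\<Sum>m\<le>l. real (l choose m) * g ^ m * (1 - g) ^ (l - m) * cb m) \<le> e"
proof -
  define t where "t l m = real (l choose m) * g ^ m * (1 - g) ^ (l - m)" for l m
  obtain M where M: "\<And>m. m \<ge> M \<Longrightarrow> cb m \<le> e/2" using cb_small[of "e/2"] e by auto
  have tnn: "0 \<le> t l m" for l m using g by (simp add: t_def)
  have tsum: "(\<Sum>m\<le>l. t l m) = 1" for l
  proof -
    have "(\<Sum>m\<le>l. t l m) = (g + (1 - g))^l" by (simp only: t_def binomial_ring)
    also have "\<dots> = 1" by simp
    finally show ?thesis .
  qed
  have bound2: "(\<Sum>m\<le>l. t l m * cb m) \<le> (\<Sum>m<M. t l m) + e/2" for l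
  proof -
    have "(\<Sum>m\<le>l. t l m * cb m) \<le> (\<Sum>m\<le>l. (if m < M then t l m else 0) + e/2 * t l m)"
    proof (rule sum_mono)
      fix m
      show "t l m * cb m \<le> (if m < M then t l m else 0) + e/2 * t l m"
      proof (cases "m < M")
        case True
        have "t l m * cb m \<le> t l m * 1" using cb_le1[of m] tnn[of l m] by (rule mult_left_mono)
        moreover have "0 \<le> e/2 * t l m" using tnn[of l m] e by simp
        ultimately show ?thesis using True by simp
      next
        case False
        then have "cb m \<le> e/2" using M[of m] by simp
        then have "t l m * cb m \<le> t l m * (e/2)" using tnn[of l m] by (rule mult_left_mono)
        then show ?thesis using False by (simp add: mult.commute)
      qed
    qed
    also have "\<dots> = (\<Sum>m\<le>l. (if m < M then t l m else 0)) + e/2 * (\<Sum>m\<le>l. t l m)"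
      by (simp only: sum.distrib sum_distrib_left)
    also have "(\<Sum>m\<le>l. (if m < M then t l m else 0)) = (\<Sum>m\<in>{..l} \<inter> {..<M}. t l m)"
      by (simp add: sum.If_cases lessThan_def)
    also have "\<dots> \<le> (\<Sum>m<M. t l m)"
      by (rule sum_mono2) (use tnn in auto)
    finally show ?thesis using tsum[of l] by simp
  qed
  have "(\<lambda>l. \<Sum>m<M. t l m) \<longlonglongrightarrow> 0"
    unfolding t_def by (rule binom_tail_lim[OF g])
  then have "eventually (\<lambda>l. (\<Sum>m<M. t l m) < e/2) sequentially"
    using e by (intro order_tendstoD) auto
  then obtain K where K: "\<And>l. l \<ge> K \<Longrightarrow> (\<Sum>m<M. t l m) < e/2"
    by (auto simp: eventually_sequentially)
  show ?thesis
  proof (intro exI allI impI)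
    fix l assume "K \<le> l"
    then show "(\<Sum>m\<le>l. real (l choose m) * g ^ m * (1 - g) ^ (l - m) * cb m) \<le> e"
      using bound2[of l] K[of l] unfolding t_def by linarith
  qed
qed

lemma conc:
  assumes p: "pm p 1" and lt: "\<forall>k. fps_nth p k < 1" and e: "0 < e"
  shows "\<exists>K. \<forall>l\<ge>K. \<forall>i. fps_nth (p^l) i \<le> e"
proof -
  have pnn: "\<And>k. 0 \<le> fps_nth p k" using pm_nonneg[OF p] by blast
  obtain u v where v: "u \<noteq> v" and u0: "0 < fps_nth p u" and v0: "0 < fps_nth p v"
    using two_atoms[OF p lt] by blast
  define \<beta> where "\<beta> = min (fps_nth p u) (fps_nth p v)"
  have b0: "0 < \<beta>" using u0 v0 by (simp add: \<beta>_def)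
  have bu: "\<beta> \<le> fps_nth p u" and bv: "\<beta> \<le> fps_nth p v" by (simp_all add: \<beta>_def)
  have "sum (fps_nth p) {u, v} \<le> (\<Sum>k. fps_nth p k)"
    by (rule sum_le_suminf) (use pm_summable[OF p] pnn in auto)
  then have "fps_nth p u + fps_nth p v \<le> 1" using v pm_suminf[OF p] by simp
  then have b1: "2 * \<beta> \<le> 1" using bu bv by linarith
  obtain K where K: "\<And>l. l \<ge> K \<Longrightarrow>
      (\<Sum>m\<le>l. real (l choose m) * (2*\<beta>) ^ m * (1 - 2*\<beta>) ^ (l - m) * cb m) \<le> e"
    using conc_tail[of "2*\<beta>" e] b0 b1 e by auto
  show ?thesis
  proof (intro exI allI impI)
    fix l i assume "K \<le> l"
    then show "fps_nth (p^l) i \<le> e" using conc_bound[OF p v b0 bu bv, of l i] K[of l] by linarith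
  qed
qed


declare piter.simps(3)[simp del]

lemma piter_pm: "pm p 1 \<Longrightarrow> pm (piter p (Suc j)) 1"
proof (induction j)
  case 0 then show ?case by simp
next
  case (Suc j) then show ?case by (simp add: pm_pcomp piter.simps(3))
qed

lemma piter_ev:
  assumes p: "pm p 1"
  shows "0 \<le> x \<Longrightarrow> x \<le> 1 \<Longrightarrow> ev (piter p (Suc (Suc j))) x = ev (piter p (Suc j)) (ev p x)"
proof (induction j arbitrary: x)
  case 0 then show ?case using ev_pcomp[OF p p] by (simp add: piter.simps(3))
next
  case (Suc j x)
  have px: "0 \<le> ev p x" "ev p x \<le> 1" using ev_nonneg[OF p Suc.prems] ev_le[OF p Suc.prems] by auto
  have "ev (piter p (Suc (Suc (Suc j)))) x = ev p (ev (piter p (Suc (Suc j))) x)"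
    unfolding piter.simps(3)[of p "Suc j"] by (rule ev_pcomp[OF p piter_pm[OF p] Suc.prems])
  also have "\<dots> = ev p (ev (piter p (Suc j)) (ev p x))" using Suc.IH[OF Suc.prems] by simp
  also have "\<dots> = ev (pcomp p (piter p (Suc j))) (ev p x)"
    using ev_pcomp[OF p piter_pm[OF p] px] by (rule sym)
  also have "\<dots> = ev (piter p (Suc (Suc j))) (ev p x)" by (simp only: piter.simps(3))
  finally show ?case .
qed

lemma markov:
  assumes p: "pm p 1"
  shows "piter p (Suc (Suc j)) = pcomp (piter p (Suc j)) p"
proof (rule ev_unique[OF piter_pm[OF p, of "Suc j"] pm_pcomp[OF piter_pm[OF p, of j] p]])
  fix x :: real assume x: "0 \<le> x" "x < 1"
  then show "ev (piter p (Suc (Suc j))) x = ev (pcomp (piter p (Suc j)) p) x"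
    using piter_ev[OF p, of x j] ev_pcomp[OF piter_pm[OF p, of j] p, of x] by simp
qed

lemma markov_nth:
  assumes p: "pm p 1"
  shows "fps_nth (piter p (Suc (Suc j))) i = (\<Sum>l. fps_nth (piter p (Suc j)) l * fps_nth (p^l) i)"
  by (subst markov[OF p]) (simp add: pcomp_nth)

lemma markov_summable:
  assumes p: "pm p 1"
  shows "summable (\<lambda>l. fps_nth (piter p (Suc j)) l * fps_nth (p^l) i)"
proof (rule summable_comparison_test'[OF pm_summable[OF piter_pm[OF p, of j]]])
  fix l
  have "fps_nth (p^l) i \<le> 1" using pm_le[OF pm_power[OF p, of l]] by simp
  moreover have "0 \<le> fps_nth (p^l) i" using pm_nonneg[OF pm_power[OF p, of l]] by simp
  moreover have "0 \<le> fps_nth (piter p (Suc j)) l" using pm_nonneg[OF piter_pm[OF p]] by simp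
  ultimately show "norm (fps_nth (piter p (Suc j)) l * fps_nth (p^l) i) \<le> fps_nth (piter p (Suc j)) l"
    by (simp add: mult_left_le)
qed

lemma c0_step:
  assumes p: "pm p 1"
  shows "fps_nth (piter p (Suc j)) 0 + fps_nth (piter p (Suc j)) k * fps_nth p 0 ^ k
           \<le> fps_nth (piter p (Suc (Suc j))) 0 \<or> k = 0"
proof (cases "k = 0")
  case False
  have "(\<Sum>l\<in>{0,k}. fps_nth (piter p (Suc j)) l * fps_nth (p^l) 0)
        \<le> (\<Sum>l. fps_nth (piter p (Suc j)) l * fps_nth (p^l) 0)"
    by (rule sum_le_suminf[OF markov_summable[OF p]])
       (use pm_nonneg[OF piter_pm[OF p]] pm_nonneg[OF pm_power[OF p]] in auto)
  then show ?thesis using False by (simp add: markov_nth[OF p] fps_nth_power_0)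
qed simp

lemma c0_mono:
  assumes p: "pm p 1"
  shows "fps_nth (piter p (Suc j)) 0 \<le> fps_nth (piter p (Suc (Suc j))) 0"
proof -
  have "(\<Sum>l\<in>{0}. fps_nth (piter p (Suc j)) l * fps_nth (p^l) 0)
        \<le> (\<Sum>l. fps_nth (piter p (Suc j)) l * fps_nth (p^l) 0)"
    by (rule sum_le_suminf[OF markov_summable[OF p]])
       (use pm_nonneg[OF piter_pm[OF p]] pm_nonneg[OF pm_power[OF p]] in auto)
  then show ?thesis by (simp add: markov_nth[OF p])
qed


lemma pw_pos:
  assumes p: "pm p 1" and a0: "0 < fps_nth p 0" and k: "k \<noteq> 0"
  shows "(\<lambda>j. fps_nth (piter p j) k) \<longlonglongrightarrow> 0"
proof -
  define y where "y j = fps_nth (piter p (Suc j)) 0" for j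
  have inc: "incseq y" unfolding y_def by (rule incseq_SucI) (rule c0_mono[OF p])
  have bdd: "bdd_above (range y)"
    unfolding y_def by (rule bdd_aboveI[of _ 1]) (use pm_le[OF piter_pm[OF p]] in auto)
  have ly: "y \<longlonglongrightarrow> (SUP i. y i)" by (rule LIMSEQ_incseq_SUP[OF bdd inc])
  have ld: "(\<lambda>j. (y (Suc j) - y j) / fps_nth p 0 ^ k) \<longlonglongrightarrow> ((SUP i. y i) - (SUP i. y i)) / fps_nth p 0 ^ k"
    by (rule tendsto_divide[OF tendsto_diff[OF LIMSEQ_Suc[OF ly] ly] tendsto_const]) (use a0 in simp)
  have le: "fps_nth (piter p (Suc j)) k \<le> (y (Suc j) - y j) / fps_nth p 0 ^ k" for j
  proof -
    have "fps_nth (piter p (Suc j)) 0 + fps_nth (piter p (Suc j)) k * fps_nth p 0 ^ k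
           \<le> fps_nth (piter p (Suc (Suc j))) 0" using c0_step[OF p, of j k] k by simp
    moreover have pk: "0 < fps_nth p 0 ^ k" using a0 by simp
    ultimately show ?thesis unfolding y_def pos_le_divide_eq[OF pk] by linarith
  qed
  have ev1: "eventually (\<lambda>j. 0 \<le> fps_nth (piter p (Suc j)) k) sequentially"
    by (rule always_eventually) (use pm_nonneg[OF piter_pm[OF p]] in blast)
  have ev2: "eventually (\<lambda>j. fps_nth (piter p (Suc j)) k \<le> (y (Suc j) - y j) / fps_nth p 0 ^ k) sequentially"
    by (rule always_eventually) (use le in blast)
  have h0: "(\<lambda>j. (y (Suc j) - y j) / fps_nth p 0 ^ k) \<longlonglongrightarrow> 0" using ld by simp
  have "(\<lambda>j. fps_nth (piter p (Suc j)) k) \<longlonglongrightarrow> 0"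
    by (rule tendsto_sandwich[OF ev1 ev2 tendsto_const h0])
  then show ?thesis by (rule LIMSEQ_imp_Suc)
qed

lemma pbound:
  assumes p: "pm p 1" and a0: "fps_nth p 0 = 0" and y: "0 \<le> y" "y \<le> 1/2"
  shows "ev p y \<le> y * ((1 + fps_nth p 1) / 2)"
proof -
  define a1 where "a1 = fps_nth p 1"
  have tm: "fps_nth p k * y ^ k \<le> fps_nth p k * y^2 + (if k = 1 then a1 * (y - y^2) else 0)" for k
  proof (cases "k \<le> 1")
    case True
    then consider "k = 0" | "k = 1" by linarith
    then show ?thesis
    proof cases
      case 1 then show ?thesis using a0 by simp
    next
      case 2 then show ?thesis by (simp add: a1_def algebra_simps)
    qed
  next
    case False
    have "y ^ k \<le> y ^ 2" using False y by (intro power_decreasing) auto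
    then have "fps_nth p k * y ^ k \<le> fps_nth p k * y^2" using pm_nonneg[OF p, of k] by (rule mult_left_mono)
    then show ?thesis using False by simp
  qed
  have s1: "(\<lambda>k. fps_nth p k * y^2) sums (1 * y^2)"
    using p unfolding pm_def by (intro sums_mult2) auto
  have s2: "(\<lambda>k. if k = 1 then a1 * (y - y^2) else 0) sums (a1 * (y - y^2))"
    using sums_single[of 1 "\<lambda>_. a1 * (y - y^2)"] by simp
  have "ev p y \<le> 1 * y^2 + a1 * (y - y^2)"
    by (rule sums_le[OF tm ev_sums[OF p] sums_add[OF s1 s2]]) (use y in auto)
  moreover have "a1 \<le> 1" using pm_le[OF p] by (simp add: a1_def)
  moreover have "y * ((1 + a1) / 2) - (1 * y^2 + a1 * (y - y^2)) = y * ((1 - a1) * (1/2 - y))"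
    by (simp add: algebra_simps power2_eq_square)
  moreover have "0 \<le> y * ((1 - a1) * (1/2 - y))" using y \<open>a1 \<le> 1\<close> by simp
  ultimately show ?thesis unfolding a1_def by linarith
qed

lemma pw_zero:
  assumes p: "pm p 1" and lt: "\<forall>k. fps_nth p k < 1" and a0: "fps_nth p 0 = 0"
  shows "(\<lambda>j. fps_nth (piter p j) k) \<longlonglongrightarrow> 0"
proof -
  define \<theta> where "\<theta> = (1 + fps_nth p 1) / 2"
  have th: "0 \<le> \<theta>" "\<theta> < 1" using lt pm_nonneg[OF p, of 1] by (auto simp: \<theta>_def)
  have G: "ev (piter p (Suc j)) (1/2) \<le> \<theta> ^ Suc j / 2" for j
  proof (induction j)
    case 0 then show ?case using pbound[OF p a0, of "1/2"] by (simp add: \<theta>_def)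
  next
    case (Suc j)
    define G where "G = ev (piter p (Suc j)) (1/2)"
    have G0: "0 \<le> G" unfolding G_def by (rule ev_nonneg[OF piter_pm[OF p]]) auto
    have "\<theta> ^ Suc j \<le> 1" using th by (intro power_le_one) auto
    then have G1: "G \<le> 1/2" using Suc unfolding G_def by linarith
    have "ev (piter p (Suc (Suc j))) (1/2) = ev p G"
      unfolding piter.simps(3) G_def by (rule ev_pcomp[OF p piter_pm[OF p]]) auto
    also have "\<dots> \<le> G * \<theta>" unfolding \<theta>_def by (rule pbound[OF p a0 G0 G1])
    also have "\<dots> \<le> \<theta> ^ Suc j / 2 * \<theta>" using Suc th unfolding G_def by (intro mult_right_mono) auto
    also have "\<dots> = \<theta> ^ Suc (Suc j) / 2" by (simp add: mult_ac)
    finally show ?case .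
  qed
  have le: "fps_nth (piter p (Suc j)) k \<le> 2 ^ k / 2 * \<theta> ^ Suc j" for j
  proof -
    have "sum (\<lambda>i. fps_nth (piter p (Suc j)) i * (1/2) ^ i) {k} \<le> ev (piter p (Suc j)) (1/2)"
      unfolding ev_def by (rule sum_le_suminf[OF ev_summable[OF piter_pm[OF p]]])
         (use pm_nonneg[OF piter_pm[OF p]] in auto)
    then have "fps_nth (piter p (Suc j)) k * (1/2) ^ k \<le> \<theta> ^ Suc j / 2" using G[of j] by simp
    then show ?thesis by (simp add: field_simps power_one_over)
  qed
  have "(\<lambda>j. 2 ^ k / 2 * \<theta> ^ Suc j) \<longlonglongrightarrow> 2 ^ k / 2 * 0"
  proof -
    have "(\<lambda>j. \<theta> ^ j) \<longlonglongrightarrow> 0" by (rule LIMSEQ_power_zero) (use th in simp)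
    from tendsto_mult[OF tendsto_const LIMSEQ_Suc[OF this]] show ?thesis .
  qed
  then have h0: "(\<lambda>j. 2 ^ k / 2 * \<theta> ^ Suc j) \<longlonglongrightarrow> 0" by simp
  have ev1: "eventually (\<lambda>j. 0 \<le> fps_nth (piter p (Suc j)) k) sequentially"
    by (rule always_eventually) (use pm_nonneg[OF piter_pm[OF p]] in blast)
  have ev2: "eventually (\<lambda>j. fps_nth (piter p (Suc j)) k \<le> 2 ^ k / 2 * \<theta> ^ Suc j) sequentially"
    by (rule always_eventually) (use le in blast)
  have "(\<lambda>j. fps_nth (piter p (Suc j)) k) \<longlonglongrightarrow> 0"
    by (rule tendsto_sandwich[OF ev1 ev2 tendsto_const h0])
  then show ?thesis by (rule LIMSEQ_imp_Suc)
qed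

lemma pw:
  assumes p: "pm p 1" and lt: "\<forall>k. fps_nth p k < 1" and k: "k \<noteq> 0"
  shows "(\<lambda>j. fps_nth (piter p j) k) \<longlonglongrightarrow> 0"
proof (cases "fps_nth p 0 = 0")
  case True then show ?thesis using pw_zero[OF p lt] by blast
next
  case False
  then have "0 < fps_nth p 0" using pm_nonneg[OF p, of 0] by simp
  then show ?thesis using pw_pos[OF p _ k] by blast
qed


lemma unif_step:
  assumes p: "pm p 1" and lt: "\<forall>k. fps_nth p k < 1" and e: "0 < e"
    and K: "\<And>l i. l \<ge> K \<Longrightarrow> fps_nth (p^l) i \<le> e"
    and i: "i \<noteq> 0"
  shows "fps_nth (piter p (Suc (Suc j))) i \<le> (\<Sum>l\<in>{1..<K}. fps_nth (piter p (Suc j)) l) + e"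
proof -
  define c where "c l = fps_nth (piter p (Suc j)) l" for l
  have cnn: "0 \<le> c l" for l unfolding c_def using pm_nonneg[OF piter_pm[OF p]] by blast
  have cs: "c sums 1" unfolding c_def using piter_pm[OF p, of j] unfolding pm_def by blast
  have tm: "c l * fps_nth (p^l) i \<le> (if l \<in> {1..<K} then c l else 0) + e * c l" for l
  proof (cases "l = 0")
    case True
    then show ?thesis using i cnn[of l] e by simp
  next
    case False
    have le1: "fps_nth (p^l) i \<le> 1" using pm_le[OF pm_power[OF p, of l]] by simp
    show ?thesis
    proof (cases "l < K")
      case True
      have "c l * fps_nth (p^l) i \<le> c l * 1" using le1 cnn[of l] by (rule mult_left_mono)
      moreover have "0 \<le> e * c l" using e cnn[of l] by simp
      ultimately show ?thesis using True False by simp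
    next
      case False2: False
      have "c l * fps_nth (p^l) i \<le> c l * e" using K[of l i] False2 cnn[of l] by (intro mult_left_mono) auto
      then show ?thesis using False2 by (simp add: mult.commute)
    qed
  qed
  have s1: "(\<lambda>l. if l \<in> {1..<K} then c l else 0) sums (\<Sum>l\<in>{1..<K}. c l)"
    by (rule sums_If_finite_set) simp
  have s2: "(\<lambda>l. e * c l) sums (e * 1)" by (rule sums_mult[OF cs])
  have sm: "(\<lambda>l. c l * fps_nth (p^l) i) sums fps_nth (piter p (Suc (Suc j))) i"
    unfolding c_def markov_nth[OF p] by (rule summable_sums[OF markov_summable[OF p]])
  have "fps_nth (piter p (Suc (Suc j))) i \<le> (\<Sum>l\<in>{1..<K}. c l) + e * 1"
    by (rule sums_le[OF tm sm sums_add[OF s1 s2]])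
  then show ?thesis unfolding c_def by simp
qed

lemma unif:
  assumes p: "pm p 1" and lt: "\<forall>k. fps_nth p k < 1" and e: "0 < e"
  shows "\<exists>J. \<forall>j\<ge>J. \<forall>i. i \<noteq> 0 \<longrightarrow> fps_nth (piter p j) i \<le> e"
proof -
  obtain K where K: "\<And>l (i::nat). l \<ge> K \<Longrightarrow> fps_nth (p^l) i \<le> e/2"
    using conc[OF p lt, of "e/2"] e by auto
  have lim: "(\<lambda>j. \<Sum>l\<in>{1..<K}. fps_nth (piter p (Suc j)) l) \<longlonglongrightarrow> 0"
  proof (rule tendsto_null_sum)
    fix l assume "l \<in> {1..<K}"
    then have "l \<noteq> 0" by simp
    from LIMSEQ_Suc[OF pw[OF p lt this]] show "(\<lambda>j. fps_nth (piter p (Suc j)) l) \<longlonglongrightarrow> 0" .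
  qed
  then have "eventually (\<lambda>j. (\<Sum>l\<in>{1..<K}. fps_nth (piter p (Suc j)) l) < e/2) sequentially"
    using e by (intro order_tendstoD) auto
  then obtain J0 where J0: "\<And>j. j \<ge> J0 \<Longrightarrow> (\<Sum>l\<in>{1..<K}. fps_nth (piter p (Suc j)) l) < e/2"
    by (auto simp: eventually_sequentially)
  show ?thesis
  proof (intro exI allI impI)
    fix j' i :: nat assume j': "Suc (Suc J0) \<le> j'" and i: "i \<noteq> 0"
    then obtain j where j: "j' = Suc (Suc j)" "J0 \<le> j" by (metis Suc_le_D le_Suc_eq Suc_le_mono)
    have "fps_nth (piter p (Suc (Suc j))) i \<le> (\<Sum>l\<in>{1..<K}. fps_nth (piter p (Suc j)) l) + e/2"
      by (rule unif_step[OF p lt _ K i]) (use e in auto)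
    then show "fps_nth (piter p j') i \<le> e" using J0[OF j(2)] j(1) by simp
  qed
qed


lemma c_le1: "pm p 1 \<Longrightarrow> j \<noteq> 0 \<Longrightarrow> fps_nth (piter p j) i \<le> 1"
  by (cases j) (auto intro: pm_le[OF piter_pm])

lemma c_nonneg: "pm p 1 \<Longrightarrow> j \<noteq> 0 \<Longrightarrow> 0 \<le> fps_nth (piter p j) i"
  by (cases j) (auto intro: pm_nonneg[OF piter_pm])

lemma q_le1: assumes p: "pm p 1" shows "qcoeff p n i \<le> 1"
proof (cases "n = 0")
  case True then show ?thesis by (simp add: qcoeff_def)
next
  case False
  have "(\<Sum>j=1..n. fps_nth (piter p j) i) \<le> of_nat (card {1..n}) * 1"
    by (rule sum_bounded_above) (use c_le1[OF p] in auto)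
  then show ?thesis using False by (simp add: qcoeff_def)
qed

lemma q_nonneg: assumes p: "pm p 1" shows "0 \<le> qcoeff p n i"
  unfolding qcoeff_def by (intro mult_nonneg_nonneg sum_nonneg c_nonneg[OF p]) auto

lemma part1:
  assumes p: "pm p 1" and n: "1 \<le> n"
  shows "qcoeff p n 0 \<le> qcoeff p (Suc n) 0"
proof -
  define x where "x j = fps_nth (piter p j) 0" for j
  have xmono: "x j \<le> x m" if "1 \<le> j" "j \<le> m" for j m
    using that(2)
  proof (induction m rule: dec_induct)
    case base then show ?case by simp
  next
    case (step k)
    have "1 \<le> k" using step.hyps(1) \<open>1 \<le> j\<close> by simp
    then obtain k' where "k = Suc k'" by (cases k) auto
    then have "x k \<le> x (Suc k)" unfolding x_def using c0_mono[OF p, of k'] by simp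
    then show ?case using step by simp
  qed
  define S where "S = (\<Sum>j=1..n. x j)"
  have S: "S \<le> real n * x (Suc n)"
  proof -
    have "S \<le> of_nat (card {1..n}) * x (Suc n)"
      unfolding S_def by (rule sum_bounded_above) (use xmono in auto)
    then show ?thesis by simp
  qed
  have q1: "qcoeff p n 0 = S / n" by (simp add: qcoeff_def S_def x_def)
  have q2: "qcoeff p (Suc n) 0 = (S + x (Suc n)) / (n + 1)"
    by (simp add: qcoeff_def S_def x_def sum.cl_ivl_Suc)
  have np: "0 < real n" using n by simp
  have "S * (real n + 1) \<le> (S + x (Suc n)) * real n"
    using S by (simp add: algebra_simps)
  then have "S / n \<le> (S + x (Suc n)) / (n + 1)"
    using np by (simp add: divide_simps add.commute)
  then show ?thesis using q1 q2 by simp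
qed

lemma count_lt: "(\<Sum>j=1..n. (if j < J then 1 else 0 :: real)) \<le> real J"
proof -
  have "(\<Sum>j=1..n. (if j < J then 1 else 0 :: real)) = (\<Sum>j\<in>{j\<in>{1..n}. j < J}. 1)"
    by (rule sum.inter_filter[symmetric]) simp
  also have "\<dots> = real (card {j\<in>{1..n}. j < J})" by simp
  also have "card {j\<in>{1..n}. j < J} \<le> card {..<J}" by (rule card_mono) auto
  then have "real (card {j\<in>{1..n}. j < J}) \<le> real J" by simp
  finally show ?thesis .
qed

lemma part2:
  assumes p: "pm p 1" and lt: "\<forall>k. fps_nth p k < 1"
  shows "(\<lambda>n. SUP i\<in>{1..}. qcoeff p n i) \<longlonglongrightarrow> 0"
proof (rule LIMSEQ_I)
  fix r :: real assume r: "0 < r"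
  define e where "e = r / 2"
  have e: "0 < e" using r by (simp add: e_def)
  obtain J where J: "\<And>j i. j \<ge> J \<Longrightarrow> i \<noteq> 0 \<Longrightarrow> fps_nth (piter p j) i \<le> e/2"
    using unif[OF p lt, of "e/2"] e by auto
  obtain N :: nat where N: "2 * real J / e \<le> N" using real_arch_simple by blast
  define N' where "N' = max N 1"
  have "\<forall>n\<ge>N'. norm ((SUP i\<in>{1..}. qcoeff p n i) - 0) < r"
  proof (intro allI impI)
    fix n assume nN: "N' \<le> n"
    then have n1: "1 \<le> n" and nN2: "N \<le> n" by (auto simp: N'_def)
    have np: "0 < real n" using n1 by simp
    have qle: "qcoeff p n i \<le> e" if i: "i \<in> {1..}" for i
    proof -
      have cj: "fps_nth (piter p j) i \<le> (if j < J then 1 else 0) + e/2" if "j \<in> {1..n}" for j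
      proof (cases "j < J")
        case True
        then show ?thesis using c_le1[OF p, of j i] that e by simp
      next
        case False
        then show ?thesis using J[of j i] i by simp
      qed
      have "(\<Sum>j=1..n. fps_nth (piter p j) i) \<le> (\<Sum>j=1..n. (if j < J then 1 else 0) + e/2)"
        by (rule sum_mono) (rule cj)
      also have "\<dots> = (\<Sum>j=1..n. (if j < J then 1 else 0 :: real)) + real n * (e/2)"
        by (simp add: sum.distrib)
      also have "\<dots> \<le> real J + real n * (e/2)" using count_lt[where n=n and J=J] by simp
      finally have sb: "(\<Sum>j=1..n. fps_nth (piter p j) i) \<le> real J + real n * (e/2)" .
      have "qcoeff p n i \<le> (real J + real n * (e/2)) / n"
        unfolding qcoeff_def using sb np by (simp add: divide_right_mono)
      also have "\<dots> = real J / n + e/2" using np by (simp add: field_simps)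
      also have "real J / n \<le> e/2"
      proof -
        have "2 * real J / e \<le> real n" using N nN2 by linarith
        then have "2 * real J \<le> real n * e" using e by (simp add: divide_le_eq)
        then show ?thesis using np e by (simp add: divide_le_eq field_simps)
      qed
      finally show ?thesis by simp
    qed
    have sup_le: "(SUP i\<in>{1..}. qcoeff p n i) \<le> e"
      by (rule cSUP_least) (use qle in auto)
    have bdd: "bdd_above ((\<lambda>i. qcoeff p n i) ` {1..})"
      by (rule bdd_aboveI[of _ 1]) (use q_le1[OF p] in auto)
    have sup_ge: "0 \<le> (SUP i\<in>{1..}. qcoeff p n i)"
      by (rule cSUP_upper2[OF bdd, of 1]) (use q_nonneg[OF p] in auto)
    show "norm ((SUP i\<in>{1..}. qcoeff p n i) - 0) < r"
      using sup_le sup_ge e r by (simp add: e_def)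
  qed
  then show "\<exists>no. \<forall>n\<ge>no. norm ((SUP i\<in>{1..}. qcoeff p n i) - 0) < r" by blast
qed

theorem corollary1:
  fixes p :: "real fps"
  assumes coeff_bounds: "\<forall>k. 0 \<le> fps_nth p k \<and> fps_nth p k < 1"
    and sum_one: "(\<lambda>k. fps_nth p k) sums 1"
  shows "(\<forall>n\<ge>1. qcoeff p n 0 \<le> qcoeff p (Suc n) 0) \<and>
         ((\<lambda>n. SUP i\<in>{1..}. qcoeff p n i) \<longlonglongrightarrow> 0)"
proof -
  have p: "pm p 1" unfolding pm_def using assms by auto
  have lt: "\<forall>k. fps_nth p k < 1" using coeff_bounds by auto
  show ?thesis using part1[OF p] part2[OF p lt] by auto
qed


end
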